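(* Let $\Sigma,\Gamma$ be finite alphabets and let $f:\Sigma^*\to\Gamma^*$ be subsequential. Then there exist an alphabet $\Delta$, a function $g:\Sigma^*\to\Delta^*$ that is $2$-TOSL on some tier on $\Sigma\cup\Delta$, and a homomorphism $h:\Delta^*\to\Gamma^*$ such that $f=h\circ g$.
   Context: Strings: $\lambda$ is the empty string; $\rtimes$ is a boundary symbol not in any alphabet. For $m\ge0$, $\mathrm{suff}^m(x)$ is the string of the last $m$ symbols of $\rtimes^mx$. $\mathrm{lcp}(A)$ is the longest common prefix of a set of strings $A$. An SFST is $T=\langle Q,\Sigma,\Gamma,q_0,\to,\sigma\rangle$ with finite state set $Q$, start state $q_0$, transition function $\to:Q\times\Sigma\to Q\times\Gamma^*$ and final output function $\sigma:Q\to\Gamma^*$; extended transitions $q\xrightarrow{x:y}r$ on strings are obtained by composing transitions and concatenating outputs. $T$ computes $f$ if $f(x)=y\sigma(q)$ whenever $q_0\xrightarrow{x:y}q$; $f$ is subsequential if some SFST computes it. A homomorphism $h:A^*\to B^*$ satisfies $h(xy)=h(x)h(y)$ for all $x,y$. For $g:\Sigma^*\to\Delta^*$: $g^{\gets}(x):=\mathrm{lcp}(\{g(xy)\mid y\in\Sigma^*\})$, and $g^{\to}_x$ is defined by $g(xy)=g^{\gets}(x)g^{\to}_x(y)$. A tier on an alphabet $A$ is a homomorphism $\tau:A^*\to A^*$ with $\tau(a)\in\{a,\lambda\}$ for all $a\in A$. $g$ is $j$-TOSL on a tier $\tau$ on $\Sigma\cup\Delta$ if for all $w,x\in\Sigma^*$,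 $\mathrm{suff}^{j-1}(\tau(g^{\gets}(w)))=\mathrm{suff}^{j-1}(\tau(g^{\gets}(x)))$ implies $g^{\to}_w=g^{\to}_x$. *)

theory Defs
  imports Main "HOL-Library.Sublist"
begin

(* Strings are lists. The boundary symbol \<rtimes> is modelled as None,
   alphabet symbols a as Some a. *)
definition suff :: "nat \<Rightarrow> 'c list \<Rightarrow> 'c option list" where
  "suff m x = drop (length x) (replicate m None @ map Some x)"

definition lcp :: "'c list set \<Rightarrow> 'c list" where
  "lcp A = (THE p. (\<forall>a\<in>A. prefix p a) \<and> (\<forall>q. (\<forall>a\<in>A. prefix q a) \<longrightarrow> prefix q p))"

fun run :: "('q \<Rightarrow> 'a \<Rightarrow> 'q \<times> 'b list) \<Rightarrow> 'q \<Rightarrow> 'a list \<Rightarrow> 'q \<times> 'b list" where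
  "run delta q [] = (q, [])"
| "run delta q (a # xs) =
     (let (r, u) = delta q a; (s, v) = run delta r xs in (s, u @ v))"

definition is_SFST ::
  "nat set \<Rightarrow> 'a set \<Rightarrow> 'b set \<Rightarrow> nat \<Rightarrow> (nat \<Rightarrow> 'a \<Rightarrow> nat \<times> 'b list) \<Rightarrow> (nat \<Rightarrow> 'b list) \<Rightarrow> bool" where
  "is_SFST Q Sig Gam q0 delta sigma \<longleftrightarrow>
     finite Q \<and> q0 \<in> Q \<and>
     (\<forall>q\<in>Q. \<forall>a\<in>Sig. fst (delta q a) \<in> Q \<and> snd (delta q a) \<in> lists Gam) \<and>
     (\<forall>q\<in>Q. sigma q \<in> lists Gam)"

definition computes ::
  "'a set \<Rightarrow> nat \<Rightarrow> (nat \<Rightarrow> 'a \<Rightarrow> nat \<times> 'b list) \<Rightarrow> (nat \<Rightarrow> 'b list) \<Rightarrow> ('a list \<Rightarrow> 'b list) \<Rightarrow> bool" where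
  "computes Sig q0 delta sigma f \<longleftrightarrow>
     (\<forall>x\<in>lists Sig. f x = snd (run delta q0 x) @ sigma (fst (run delta q0 x)))"

definition subsequential :: "'a set \<Rightarrow> 'b set \<Rightarrow> ('a list \<Rightarrow> 'b list) \<Rightarrow> bool" where
  "subsequential Sig Gam f \<longleftrightarrow>
     (\<exists>Q q0 delta sigma. is_SFST Q Sig Gam q0 delta sigma \<and> computes Sig q0 delta sigma f)"

definition is_hom :: "'c set \<Rightarrow> 'd set \<Rightarrow> ('c list \<Rightarrow> 'd list) \<Rightarrow> bool" where
  "is_hom A B h \<longleftrightarrow> (\<forall>x\<in>lists A. h x \<in> lists B) \<and>
     (\<forall>x\<in>lists A. \<forall>y\<in>lists A. h (x @ y) = h x @ h y)"

definition is_tier :: "'c set \<Rightarrow> ('c list \<Rightarrow> 'c list) \<Rightarrow> bool" where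
  "is_tier A tau \<longleftrightarrow> is_hom A A tau \<and> (\<forall>a\<in>A. tau [a] = [a] \<or> tau [a] = [])"

definition gl :: "'a set \<Rightarrow> ('a list \<Rightarrow> 'd list) \<Rightarrow> 'a list \<Rightarrow> 'd list" where
  "gl Sig g x = lcp {g (x @ y) | y. y \<in> lists Sig}"

(* g^{\<rightarrow>}_x(y), determined by g(xy) = g^{\<leftarrow>}(x) g^{\<rightarrow>}_x(y) *)
definition gr :: "'a set \<Rightarrow> ('a list \<Rightarrow> 'd list) \<Rightarrow> 'a list \<Rightarrow> 'a list \<Rightarrow> 'd list" where
  "gr Sig g x y = drop (length (gl Sig g x)) (g (x @ y))"

(* g : Sig* \<rightarrow> Del* is j-TOSL on tier tau on Sig \<union> Del
   (Sig \<union> Del realised as the disjoint union Sig <+> Del) *)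
definition TOSL ::
  "nat \<Rightarrow> 'a set \<Rightarrow> 'd set \<Rightarrow> (('a + 'd) list \<Rightarrow> ('a + 'd) list) \<Rightarrow> ('a list \<Rightarrow> 'd list) \<Rightarrow> bool" where
  "TOSL j Sig Del tau g \<longleftrightarrow>
     (\<forall>w\<in>lists Sig. \<forall>x\<in>lists Sig.
        suff (j - 1) (tau (map Inr (gl Sig g w))) = suff (j - 1) (tau (map Inr (gl Sig g x)))
        \<longrightarrow> (\<forall>y\<in>lists Sig. gr Sig g w y = gr Sig g x y))"

end

theory Submission
  imports Defs
begin

lemma run_append:
  "run d q (x @ y) = (fst (run d (fst (run d q x)) y), snd (run d q x) @ snd (run d (fst (run d q x)) y))"
  by (induction x arbitrary: q) (auto split: prod.split)

lemma run_Q: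
  assumes "is_SFST Q Sig Gam q0 d s" "q \<in> Q" "x \<in> lists Sig"
  shows "fst (run d q x) \<in> Q \<and> snd (run d q x) \<in> lists Gam"
  using assms(2,3)
proof (induction x arbitrary: q)
  case Nil then show ?case by simp
next
  case (Cons a x)
  have "fst (d q a) \<in> Q" "snd (d q a) \<in> lists Gam"
    using assms(1) Cons.prems unfolding is_SFST_def by auto
  with Cons.IH[of "fst (d q a)"] Cons.prems show ?case
    by (auto split: prod.split)
qed

fun trace :: "('q \<Rightarrow> 'a \<Rightarrow> 'q \<times> 'b list) \<Rightarrow> 'q \<Rightarrow> 'a list \<Rightarrow> (bool \<times> 'q \<times> 'b list) list" where
  "trace d q [] = []"
| "trace d q (a # x) = (False, fst (d q a), snd (d q a)) # trace d (fst (d q a)) x"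

lemma trace_append: "trace d q (x @ y) = trace d q x @ trace d (fst (run d q x)) y"
  by (induction x arbitrary: q) (auto split: prod.split)

lemma trace_out: "concat (map (snd \<circ> snd) (trace d q x)) = snd (run d q x)"
  by (induction x arbitrary: q) (auto split: prod.split)

lemma trace_last: "fst (snd (last ((b, q, u) # trace d q x))) = fst (run d q x)"
proof (induction x arbitrary: q b u)
  case Nil then show ?case by simp
next
  case (Cons a x)
  have "last ((b, q, u) # trace d q (a # x)) = last ((False, fst (d q a), snd (d q a)) # trace d (fst (d q a)) x)"
    by simp
  moreover have "fst (run d q (a # x)) = fst (run d (fst (d q a)) x)"
    by (simp split: prod.split)
  moreover have "fst (snd (last ((False, fst (d q a), snd (d q a)) # trace d (fst (d q a)) x))) = fst (run d (fst (d q a)) x)"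
    by (rule Cons.IH)
  ultimately show ?case by metis
qed

lemma trace_in:
  assumes "is_SFST Q Sig Gam q0 d s" "q \<in> Q" "x \<in> lists Sig"
  shows "set (trace d q x) \<subseteq> {(False, fst (d q a), snd (d q a)) | q a. q \<in> Q \<and> a \<in> Sig}"
  using assms(2,3)
proof (induction x arbitrary: q)
  case Nil then show ?case by simp
next
  case (Cons a x)
  have "fst (d q a) \<in> Q"
    using assms(1) Cons.prems unfolding is_SFST_def by auto
  with Cons.IH[of "fst (d q a)"] Cons.prems show ?case by auto
qed

lemma lcp_eqI:
  assumes "\<forall>a\<in>A. prefix p a" "\<forall>q. (\<forall>a\<in>A. prefix q a) \<longrightarrow> prefix q p"
  shows "lcp A = p"
  unfolding lcp_def
  apply (rule the_equality)
  using assms apply blast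
  using assms by (meson prefix_order.antisym)

lemma prefix_two:
  assumes "prefix q (p @ [c] @ r1)" "prefix q (p @ [d] @ r2)" "c \<noteq> d"
  shows "prefix q p"
  using assms
proof (induction p arbitrary: q)
  case Nil
  then show ?case by (cases q) auto
next
  case (Cons a p)
  then show ?case by (cases q) auto
qed

lemma suff1: "x \<noteq> [] \<Longrightarrow> suff 1 x = [Some (last x)]"
proof -
  assume "x \<noteq> []"
  then obtain y a where "x = y @ [a]" by (metis append_butlast_last_id)
  then show ?thesis unfolding suff_def by simp
qed

lemma suff_last:
  assumes "a \<noteq> []" "b \<noteq> []"
    and "suff (2 - 1) (id (map (Inr :: 'd \<Rightarrow> 'c + 'd) a)) = suff (2 - 1) (id (map (Inr :: 'd \<Rightarrow> 'c + 'd) b))"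
  shows "last a = last b"
proof -
  have "suff 1 (map (Inr :: 'd \<Rightarrow> 'c + 'd) a) = [Some (last (map (Inr :: 'd \<Rightarrow> 'c + 'd) a))]" by (rule suff1) (simp add: assms(1))
  moreover have "suff 1 (map (Inr :: 'd \<Rightarrow> 'c + 'd) b) = [Some (last (map (Inr :: 'd \<Rightarrow> 'c + 'd) b))]" by (rule suff1) (simp add: assms(2))
  ultimately show ?thesis using assms by (simp add: last_map)
qed

theorem proposition21:
  fixes Sig :: "'a set" and Gam :: "'b set" and f :: "'a list \<Rightarrow> 'b list"
  assumes "finite Sig" and "finite Gam"
    and "\<forall>x\<in>lists Sig. f x \<in> lists Gam"
    and "subsequential Sig Gam f"
  shows "\<exists>(Del :: nat set) (g :: 'a list \<Rightarrow> nat list) tau (h :: nat list \<Rightarrow> 'b list).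
           finite Del \<and>
           (\<forall>x\<in>lists Sig. g x \<in> lists Del) \<and>
           is_tier (Sig <+> Del) tau \<and> TOSL 2 Sig Del tau g \<and>
           is_hom Del Gam h \<and>
           (\<forall>x\<in>lists Sig. f x = h (g x))"
proof -
  obtain Q q0 d s where S: "is_SFST Q Sig Gam q0 d s" and C: "computes Sig q0 d s f"
    using assms(4) unfolding subsequential_def by blast
  have finQ: "finite Q" and q0Q: "q0 \<in> Q" using S unfolding is_SFST_def by auto
  define A1 where "A1 = {(False, fst (d q a), snd (d q a)) | q a. q \<in> Q \<and> a \<in> Sig}"
  define A2 where "A2 = {(True, q, s q) | q. q \<in> Q}"
  define A where "A = insert (False, q0, []) (A1 \<union> A2)"
  have "A1 = (\<lambda>(q, a). (False, fst (d q a), snd (d q a))) ` (Q \<times> Sig)"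
    unfolding A1_def by auto
  then have fA1: "finite A1" using finQ assms(1) by simp
  have "A2 = (\<lambda>q. (True, q, s q)) ` Q" unfolding A2_def by auto
  then have fA2: "finite A2" using finQ by simp
  have fA: "finite A" unfolding A_def using fA1 fA2 by simp
  obtain e :: "bool \<times> nat \<times> 'b list \<Rightarrow> nat" and n where inj: "inj_on e A"
    using finite_imp_inj_to_nat_seg[OF fA] by blast
  define Del where "Del = e ` A"
  define H where "H = (\<lambda>k. snd (snd (inv_into A e k)))"
  define h where "h = (\<lambda>x. concat (map H x))"
  define G where "G = (\<lambda>x. (False, q0, []) # trace d q0 x @ [(True, fst (run d q0 x), s (fst (run d q0 x)))])"
  define g where "g = (\<lambda>x. map e (G x))"
  have He: "H (e m) = snd (snd m)" if "m \<in> A" for m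
    unfolding H_def using inv_into_f_f[OF inj that] by simp
  have tr_in: "set (trace d q x) \<subseteq> A" if "q \<in> Q" "x \<in> lists Sig" for q x
    using trace_in[OF S that] unfolding A_def A1_def by blast
  have runQ: "fst (run d q x) \<in> Q" if "q \<in> Q" "x \<in> lists Sig" for q x
    using run_Q[OF S that] by blast
  have G_in: "set (G x) \<subseteq> A" if "x \<in> lists Sig" for x
    using tr_in[OF q0Q that] runQ[OF q0Q that] unfolding G_def A_def A2_def by auto
  have hom: "is_hom Del Gam h"
    unfolding is_hom_def h_def Del_def
  proof (intro conjI ballI)
    fix x assume "x \<in> lists (e ` A)"
    then show "concat (map H x) \<in> lists Gam"
    proof (induction x)
      case Nil then show ?case by simp
    next
      case (Cons k x)
      then obtain m where m: "m \<in> A" "k = e m" by auto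
      have "snd (snd m) \<in> lists Gam"
        using m(1) S unfolding A_def A1_def A2_def is_SFST_def by fastforce
      then show ?case using Cons m He by simp
    qed
  qed simp
  have fg: "f x = h (g x)" if "x \<in> lists Sig" for x
  proof -
    have "h (g x) = concat (map (H \<circ> e) (G x))" unfolding h_def g_def by simp
    also have "\<dots> = concat (map (snd \<circ> snd) (G x))"
      using G_in[OF that] He by (intro arg_cong[where f=concat] map_cong) auto
    also have "\<dots> = snd (run d q0 x) @ s (fst (run d q0 x))"
      unfolding G_def using trace_out[of d q0 x] by simp
    finally show ?thesis using C that unfolding computes_def by simp
  qed
  have gDel: "g x \<in> lists Del" if "x \<in> lists Sig" for x
    using G_in[OF that] unfolding g_def Del_def by (auto simp: subset_iff)
  have tier: "is_tier (Sig <+> Del) id"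
    unfolding is_tier_def is_hom_def by simp
  define P where "P = (\<lambda>w. (False, q0, []) # trace d q0 w)"
  have gapp: "g (w @ y) = map e (P w) @ map e (trace d (fst (run d q0 w)) y @
       [(True, fst (run d (fst (run d q0 w)) y), s (fst (run d (fst (run d q0 w)) y)))])" for w y
    unfolding g_def G_def P_def by (simp add: trace_append run_append)
  have gl_eq: "gl Sig g w = map e (P w)" if wS: "w \<in> lists Sig" and ne0: "Sig \<noteq> {}" for w
  proof -
    obtain a where a: "a \<in> Sig" using ne0 by blast
    let ?qw = "fst (run d q0 w)"
    have qw: "?qw \<in> Q" using runQ[OF q0Q wS] .
    have inA1: "(False, fst (d ?qw a), snd (d ?qw a)) \<in> A" unfolding A_def A1_def using qw a by blast
    have inA2: "(True, ?qw, s ?qw) \<in> A" unfolding A_def A2_def using qw by blast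
    have ne: "e (False, fst (d ?qw a), snd (d ?qw a)) \<noteq> e (True, ?qw, s ?qw)"
      using inj_on_eq_iff[OF inj inA1 inA2] by simp
    have g1: "g (w @ [a]) = map e (P w) @ [e (False, fst (d ?qw a), snd (d ?qw a))] @
       map e (trace d (fst (d ?qw a)) [] @ [(True, fst (run d (fst (run d q0 w)) [a]), s (fst (run d (fst (run d q0 w)) [a])))])"
      using gapp[of w "[a]"] by simp
    have g0: "g (w @ []) = map e (P w) @ [e (True, ?qw, s ?qw)] @ []"
      using gapp[of w "[]"] by simp
    show ?thesis unfolding gl_def
    proof (rule lcp_eqI)
      show "\<forall>x\<in>{g (w @ y) |y. y \<in> lists Sig}. prefix (map e (P w)) x"
        using gapp by auto
      show "\<forall>q. (\<forall>x\<in>{g (w @ y) |y. y \<in> lists Sig}. prefix q x) \<longrightarrow> prefix q (map e (P w))"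
      proof (intro allI impI)
        fix q assume H1: "\<forall>x\<in>{g (w @ y) |y. y \<in> lists Sig}. prefix q x"
        have m1: "g (w @ [a]) \<in> {g (w @ y) |y. y \<in> lists Sig}" using a by auto
        have m0: "g (w @ []) \<in> {g (w @ y) |y. y \<in> lists Sig}" by blast
        have "prefix q (g (w @ [a]))" using H1 m1 by blast
        moreover have "prefix q (g (w @ []))" using H1 m0 by blast
        ultimately show "prefix q (map e (P w))"
          using prefix_two[OF _ _ ne] g1 g0 by metis
      qed
    qed
  qed
  have lastP: "fst (snd (last (P w))) = fst (run d q0 w)" for w
    unfolding P_def by (rule trace_last)
  have PA: "set (P w) \<subseteq> A" if "w \<in> lists Sig" for w
    using tr_in[OF q0Q that] unfolding P_def A_def by auto
  have tosl: "TOSL 2 Sig Del id g"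
    unfolding TOSL_def
  proof (intro ballI impI)
    fix w x y assume w: "w \<in> lists Sig" and x: "x \<in> lists Sig" and y: "y \<in> lists Sig"
      and eq: "suff (2 - 1) (id (map Inr (gl Sig g w))) = suff (2 - 1) (id (map Inr (gl Sig g x)))"
    show "gr Sig g w y = gr Sig g x y"
    proof (cases "Sig = {}")
      case True
      then have "w = []" "x = []" using w x by (auto simp: lists_empty)
      then show ?thesis by simp
    next
      case False
      have glw: "gl Sig g w = map e (P w)" and glx: "gl Sig g x = map e (P x)"
        using gl_eq w x False by auto
      have "P w \<noteq> []" "P x \<noteq> []" unfolding P_def by auto
      have "e (last (P w)) = e (last (P x))"
        using suff_last[OF _ _ eq[unfolded glw glx]] \<open>P w \<noteq> []\<close> \<open>P x \<noteq> []\<close>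
        by (simp add: last_map)
      moreover have "last (P w) \<in> A" "last (P x) \<in> A"
        using PA[OF w] PA[OF x] \<open>P w \<noteq> []\<close> \<open>P x \<noteq> []\<close> by auto
      ultimately have "last (P w) = last (P x)" using inj_on_eq_iff[OF inj] by blast
      then have "fst (run d q0 w) = fst (run d q0 x)" using lastP by metis
      then show ?thesis unfolding gr_def glw glx gapp by simp
    qed
  qed
  show ?thesis
    apply (rule exI[of _ Del], rule exI[of _ g], rule exI[of _ id], rule exI[of _ h])
    using fA tier tosl hom fg gDel unfolding Del_def by auto
qed

end
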